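(* Let $n\ge2$, $m\ge1$, $\lambda_0\ne0$, $\lambda_1>0$, $\lambda_2\ge0$, $\omega\in\mathbb{R}$, and run a PIFO algorithm with initial point $x_0=0$ and sampling probabilities $(p_1,\dots,p_n)$ on the components $f_i=r_i(\cdot;\lambda_0,\lambda_1,\lambda_2,m,\omega)$, $i=1,\dots,n$. Define $T_0=0$ and, for $k\ge1$, $T_k=\min\{t:t>T_{k-1},\ i_t\equiv k\pmod n\}$. Then for every $1\le k\le m$ and every $t<T_k$ we have $x_t\in\mathcal{F}_{k-1}$. Moreover, for every $k\ge1$, $T_k=\sum_{l=1}^kY_l$ where $Y_1,\dots,Y_k$ are independent and $Y_l$ is geometrically distributed with success probability $q_l=p_{l'}$, where $l'\in\{1,\dots,n\}$ and $l'\equiv l\pmod n$ (a geometric variable with success probability $0$ is $+\infty$ almost surely).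
   Context: For $\omega\in\mathbb{R}$, $B(m,\omega)\in\mathbb{R}^{m\times m}$ is the matrix whose row $l$, for $1\le l\le m-1$, has entry $-1$ in column $m-l$ and entry $1$ in column $m-l+1$, and whose row $m$ is $\omega e_1^\top$; $b_l(m,\omega)^\top$ is its $l$-th row. $\mathcal{L}_i=\{l:1\le l\le m,\ l\equiv i-1\pmod n\}$. $r_1(x)=\lambda_1\sum_{l\in\mathcal{L}_1}(b_l(m,\omega)^\top x)^2+\lambda_2\|x\|_2^2-\lambda_0\langle e_m,x\rangle$ and $r_i(x)=\lambda_1\sum_{l\in\mathcal{L}_i}(b_l(m,\omega)^\top x)^2+\lambda_2\|x\|_2^2$ for $i\ge2$, $x\in\mathbb{R}^m$. $\mathcal{F}_0=\{0\}$, $\mathcal{F}_k=\mathrm{span}\{e_m,\dots,e_{m-k+1}\}$. A random variable $Y$ is geometric with success probability $p$ if $\mathbb{P}(Y=s)=(1-p)^{s-1}p$ for $s=1,2,\dots$. For $\gamma>0$, $\mathrm{prox}^{\gamma}_g(x)=\arg\min_u\{g(u)+\frac{1}{2\gamma}\|x-u\|_2^2\}$. PIFO algorithm: a probability vector $(p_1,\dots,p_n)$, initial point $x_0$, parameters $\gamma_t>0$; indices $i_1,i_2,\dots$ drawn independently with $\mathbb{P}(i_t=j)=p_j$; iterates $x_t\in\mathrm{span}\{x_0,\dots,x_{t-1},\nabla f_{i_1}(x_0),\dots,\nabla f_{i_t}(x_{t-1}),\mathrm{prox}^{\gamma_1}_{f_{i_1}}(x_0),\dots,\mathrm{prox}^{\gamma_t}_{f_{i_t}}(x_{t-1})\}$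 for $t\ge1$. *)

theory Defs
  imports "HOL-Probability.Probability"
begin

text \<open>Vectors of R^m are represented as functions nat => real, with coordinates
  indexed by 1..m and vanishing outside {1..m}.\<close>

definition vecs :: "nat \<Rightarrow> (nat \<Rightarrow> real) set" where
  "vecs m = {x. \<forall>j. j \<notin> {1..m} \<longrightarrow> x j = 0}"

definition ip :: "nat \<Rightarrow> (nat \<Rightarrow> real) \<Rightarrow> (nat \<Rightarrow> real) \<Rightarrow> real" where
  "ip m x y = (\<Sum>j=1..m. x j * y j)"

definition ev :: "nat \<Rightarrow> nat \<Rightarrow> real" where
  "ev j = (\<lambda>i. if i = j then 1 else 0)"

definition lin_span :: "(nat \<Rightarrow> real) set \<Rightarrow> (nat \<Rightarrow> real) set" where
  "lin_span S = {y. \<exists>F c. finite F \<and> F \<subseteq> S \<and> y = (\<lambda>j. \<Sum>v\<in>F. c v * v j)}"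

definition brow :: "nat \<Rightarrow> real \<Rightarrow> nat \<Rightarrow> nat \<Rightarrow> real" where
  "brow m w l = (if l < m then (\<lambda>j. ev (m - l + 1) j - ev (m - l) j) else (\<lambda>j. w * ev 1 j))"

definition Lset :: "nat \<Rightarrow> nat \<Rightarrow> nat \<Rightarrow> nat set" where
  "Lset m n i = {l \<in> {1..m}. l mod n = (i - 1) mod n}"

definition rfun :: "real \<Rightarrow> real \<Rightarrow> real \<Rightarrow> nat \<Rightarrow> real \<Rightarrow> nat \<Rightarrow> nat \<Rightarrow> (nat \<Rightarrow> real) \<Rightarrow> real" where
  "rfun l0 l1 l2 m w n i x =
     l1 * (\<Sum>l\<in>Lset m n i. (ip m (brow m w l) x)\<^sup>2) + l2 * ip m x x
     - (if i = 1 then l0 * ip m (ev m) x else 0)"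

definition Fsp :: "nat \<Rightarrow> nat \<Rightarrow> (nat \<Rightarrow> real) set" where
  "Fsp m k = lin_span {ev j | j. m - k < j \<and> j \<le> m}"

definition grad :: "nat \<Rightarrow> ((nat \<Rightarrow> real) \<Rightarrow> real) \<Rightarrow> (nat \<Rightarrow> real) \<Rightarrow> (nat \<Rightarrow> real)" where
  "grad m f x = (THE g. g \<in> vecs m \<and>
      (\<forall>v\<in>vecs m. ((\<lambda>t. f (\<lambda>j. x j + t * v j)) has_real_derivative ip m g v) (at 0)))"

definition prox :: "nat \<Rightarrow> real \<Rightarrow> ((nat \<Rightarrow> real) \<Rightarrow> real) \<Rightarrow> (nat \<Rightarrow> real) \<Rightarrow> (nat \<Rightarrow> real)" where
  "prox m \<gamma> g x = (THE u. u \<in> vecs m \<and>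
      (\<forall>v\<in>vecs m. g u + ip m (\<lambda>j. x j - u j) (\<lambda>j. x j - u j) / (2 * \<gamma>)
                  < g v + ip m (\<lambda>j. x j - v j) (\<lambda>j. x j - v j) / (2 * \<gamma>) \<or> v = u))"

primrec Tk :: "nat \<Rightarrow> (nat \<Rightarrow> 'a \<Rightarrow> nat) \<Rightarrow> nat \<Rightarrow> 'a \<Rightarrow> enat" where
  "Tk n idx 0 \<omega> = 0"
| "Tk n idx (Suc k) \<omega> =
     (if \<exists>t. enat t > Tk n idx k \<omega> \<and> idx t \<omega> mod n = Suc k mod n
      then enat (LEAST t. enat t > Tk n idx k \<omega> \<and> idx t \<omega> mod n = Suc k mod n)
      else \<infinity>)"

text \<open>Y is geometric with success probability q: P(Y = s) = (1-q)^(s-1) q for s = 1,2,...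
  (for q = 0 this forces Y = infinity almost surely)\<close>
definition geometric_rv :: "'b measure \<Rightarrow> real \<Rightarrow> ('b \<Rightarrow> enat) \<Rightarrow> bool" where
  "geometric_rv N q Y \<longleftrightarrow> Y \<in> measurable N (count_space UNIV) \<and>
     (\<forall>s::nat. measure N {\<omega> \<in> space N. Y \<omega> = enat s} = (if 1 \<le> s then (1 - q) ^ (s - 1) * q else 0))"

end

theory Submission
  imports Defs
begin


definition Zs :: "nat \<Rightarrow> nat \<Rightarrow> (nat \<Rightarrow> real) set" where
  "Zs m b = {y. \<forall>j. (j \<le> m - b \<or> m < j) \<longrightarrow> y j = 0}"

lemma Zs_vecs: "y \<in> Zs m b \<Longrightarrow> y \<in> vecs m"
  unfolding Zs_def vecs_def by auto

lemma Zs_mono: "b \<le> b' \<Longrightarrow> y \<in> Zs m b \<Longrightarrow> y \<in> Zs m b'"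
  unfolding Zs_def by auto

lemma lin_span_vanish:
  assumes "\<forall>v\<in>S. \<forall>j\<in>R. v j = 0" "y \<in> lin_span S" "j \<in> R"
  shows "y j = 0"
proof -
  from assms(2) obtain F c where F: "finite F" "F \<subseteq> S" "y = (\<lambda>j. \<Sum>v\<in>F. c v * v j)"
    unfolding lin_span_def by blast
  have "(\<Sum>v\<in>F. c v * v j) = 0" using F assms(1,3) by (intro sum.neutral) auto
  then show ?thesis using F by simp
qed

lemma lin_span_Zs:
  assumes "S \<subseteq> Zs m b" "y \<in> lin_span S"
  shows "y \<in> Zs m b"
  using lin_span_vanish[of S "{j. j \<le> m - b \<or> m < j}" y] assms unfolding Zs_def by blast

lemma Zs_Fsp:
  assumes "y \<in> Zs m b"
  shows "y \<in> Fsp m b"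
proof -
  define J where "J = {m - b<..m}"
  define F where "F = ev ` J"
  define c where "c v = (\<Sum>j\<in>J. v j * y j)" for v
  have inj: "inj_on ev J" by (rule inj_onI) (auto simp: ev_def fun_eq_iff split: if_splits)
  have cev: "c (ev j) = y j" if "j \<in> J" for j
  proof -
    have "c (ev j) = (\<Sum>j'\<in>J. (if j' = j then y j' else 0))"
      unfolding c_def by (intro sum.cong) (auto simp: ev_def)
    also have "\<dots> = y j" using that J_def by (simp add: sum.delta')
    finally show ?thesis .
  qed
  have "y = (\<lambda>i. \<Sum>v\<in>F. c v * v i)"
  proof
    fix i
    have "(\<Sum>v\<in>F. c v * v i) = (\<Sum>j\<in>J. c (ev j) * ev j i)"
      unfolding F_def by (rule sum.reindex[OF inj, unfolded comp_def])
    also have "\<dots> = (\<Sum>j\<in>J. if j = i then y j else 0)"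
    proof (rule sum.cong[OF refl])
      fix j assume "j \<in> J"
      show "c (ev j) * ev j i = (if j = i then y j else 0)" using cev[OF \<open>j \<in> J\<close>] by (simp add: ev_def)
    qed
    also have "\<dots> = (if i \<in> J then y i else 0)" by (simp add: J_def sum.delta)
    also have "\<dots> = y i" using assms unfolding Zs_def J_def by auto
    finally show "y i = (\<Sum>v\<in>F. c v * v i)" by simp
  qed
  moreover have "finite F" "F \<subseteq> {ev j | j. m - b < j \<and> j \<le> m}"
    unfolding F_def J_def by auto
  ultimately show ?thesis unfolding Fsp_def lin_span_def by blast
qed

lemma ip_sym: "ip m u v = ip m v u"
  unfolding ip_def by (simp add: mult.commute)

lemma ip_line: "ip m u (\<lambda>j. x j + t * v j) = ip m u x + t * ip m u v"
  unfolding ip_def by (simp add: algebra_simps sum.distrib sum_distrib_left)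

lemma ip_line_self:
  "ip m (\<lambda>j. x j + t * v j) (\<lambda>j. x j + t * v j) = ip m x x + 2 * t * ip m x v + t\<^sup>2 * ip m v v"
  unfolding ip_def by (simp add: algebra_simps sum.distrib sum_distrib_left power2_eq_square)

lemma ip_ev: "j \<in> {1..m} \<Longrightarrow> ip m v (ev j) = v j"
  unfolding ip_def ev_def by (simp add: sum.delta' if_distrib cong: if_cong)

lemma ev_vecs: "j \<in> {1..m} \<Longrightarrow> ev j \<in> vecs m"
  unfolding vecs_def ev_def by auto

lemma brow_vecs: "l \<in> {1..m} \<Longrightarrow> brow m w l \<in> vecs m"
  unfolding vecs_def brow_def ev_def by auto

lemma vecs_ext: "u \<in> vecs m \<Longrightarrow> v \<in> vecs m \<Longrightarrow> (\<forall>j\<in>{1..m}. u j = v j) \<Longrightarrow> u = v"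
  unfolding vecs_def by (auto simp: fun_eq_iff)


definition g0 :: "real \<Rightarrow> real \<Rightarrow> real \<Rightarrow> nat \<Rightarrow> real \<Rightarrow> nat \<Rightarrow> nat \<Rightarrow> (nat \<Rightarrow> real) \<Rightarrow> (nat \<Rightarrow> real)" where
  "g0 l0 l1 l2 m w n i x = (\<lambda>j. 2 * l1 * (\<Sum>l\<in>Lset m n i. ip m (brow m w l) x * brow m w l j) + 2 * l2 * x j
      - (if i = 1 then l0 * ev m j else 0))"

lemma Lset_sub: "Lset m n i \<subseteq> {1..m}" unfolding Lset_def by auto
lemma Lset_fin: "finite (Lset m n i)" using finite_subset[OF Lset_sub] by auto

lemma g0_vecs:
  assumes "x \<in> vecs m" "m \<ge> 1"
  shows "g0 l0 l1 l2 m w n i x \<in> vecs m"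
proof -
  have "brow m w l j = 0" if "l \<in> Lset m n i" "j \<notin> {1..m}" for l j
  proof -
    have "brow m w l \<in> vecs m" using brow_vecs[of l m w] that(1) Lset_sub by blast
    then show ?thesis using that(2) unfolding vecs_def by blast
  qed
  then show ?thesis using assms unfolding vecs_def g0_def by (auto simp: ev_def)
qed

lemma ip_g0:
  "ip m (g0 l0 l1 l2 m w n i x) v = 2 * l1 * (\<Sum>l\<in>Lset m n i. ip m (brow m w l) x * ip m (brow m w l) v)
     + 2 * l2 * ip m x v - (if i = 1 then l0 * ip m (ev m) v else 0)"
proof -
  have "ip m (g0 l0 l1 l2 m w n i x) v = (\<Sum>j=1..m. 2 * l1 * (\<Sum>l\<in>Lset m n i. ip m (brow m w l) x * brow m w l j * v j))
     + (\<Sum>j=1..m. 2 * l2 * x j * v j) - (\<Sum>j=1..m. (if i = 1 then l0 * ev m j * v j else 0))"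
    unfolding ip_def g0_def by (cases "i = 1") (simp_all add: algebra_simps sum.distrib sum_subtractf sum_distrib_left sum_distrib_right)
  also have "(\<Sum>j=1..m. 2 * l1 * (\<Sum>l\<in>Lset m n i. ip m (brow m w l) x * brow m w l j * v j))
      = 2 * l1 * (\<Sum>l\<in>Lset m n i. ip m (brow m w l) x * ip m (brow m w l) v)"
    unfolding ip_def by (simp add: sum_distrib_left sum_distrib_right mult.assoc) (rule sum.swap)
  also have "(\<Sum>j=1..m. 2 * l2 * x j * v j) = 2 * l2 * ip m x v"
    unfolding ip_def by (simp add: sum_distrib_left mult.assoc)
  also have "(\<Sum>j=1..m. (if i = 1 then l0 * ev m j * v j else 0)) = (if i = 1 then l0 * ip m (ev m) v else 0)"
    unfolding ip_def by (cases "i = 1") (simp_all add: sum_distrib_left mult.assoc)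
  finally show ?thesis .
qed

lemma rfun_line:
  "rfun l0 l1 l2 m w n i (\<lambda>j. x j + t * v j) = rfun l0 l1 l2 m w n i x + t * ip m (g0 l0 l1 l2 m w n i x) v
     + t\<^sup>2 * (l1 * (\<Sum>l\<in>Lset m n i. (ip m (brow m w l) v)\<^sup>2) + l2 * ip m v v)"
  unfolding rfun_def ip_g0 ip_line_self ip_line
  by (simp add: algebra_simps power2_eq_square sum.distrib sum_distrib_left)

lemma grad_eq:
  assumes x: "x \<in> vecs m" and m: "m \<ge> 1"
  shows "grad m (rfun l0 l1 l2 m w n i) x = g0 l0 l1 l2 m w n i x"
  unfolding grad_def
proof (rule the_equality)
  have D: "((\<lambda>t. rfun l0 l1 l2 m w n i (\<lambda>j. x j + t * v j)) has_real_derivative ip m (g0 l0 l1 l2 m w n i x) v) (at 0)" for v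
    unfolding rfun_line by (auto intro!: derivative_eq_intros)
  show "g0 l0 l1 l2 m w n i x \<in> vecs m \<and> (\<forall>v\<in>vecs m. ((\<lambda>t. rfun l0 l1 l2 m w n i (\<lambda>j. x j + t * v j)) has_real_derivative ip m (g0 l0 l1 l2 m w n i x) v) (at 0))"
    using g0_vecs[OF x m] D by simp
  fix g assume g: "g \<in> vecs m \<and> (\<forall>v\<in>vecs m. ((\<lambda>t. rfun l0 l1 l2 m w n i (\<lambda>j. x j + t * v j)) has_real_derivative ip m g v) (at 0))"
  show "g = g0 l0 l1 l2 m w n i x"
  proof (rule vecs_ext)
    show "g \<in> vecs m" using g by blast
    show "g0 l0 l1 l2 m w n i x \<in> vecs m" using g0_vecs[OF x m] .
    show "\<forall>j\<in>{1..m}. g j = g0 l0 l1 l2 m w n i x j"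
    proof
      fix j assume j: "j \<in> {1..m}"
      have "((\<lambda>t. rfun l0 l1 l2 m w n i (\<lambda>ja. x ja + t * ev j ja)) has_real_derivative ip m g (ev j)) (at 0)"
        using g ev_vecs[OF j] by simp
      then have "ip m g (ev j) = ip m (g0 l0 l1 l2 m w n i x) (ev j)"
        using DERIV_unique[OF _ D[of "ev j"]] by simp
      then show "g j = g0 l0 l1 l2 m w n i x j" using ip_ev[OF j] by simp
    qed
  qed
qed


lemma ip_brow:
  assumes "l \<in> {1..m}"
  shows "ip m (brow m w l) x = (if l < m then x (m - l + 1) - x (m - l) else w * x 1)"
proof (cases "l < m")
  case True
  have a: "m - l + 1 \<in> {1..m}" "m - l \<in> {1..m}" using True assms by auto
  have "ip m (brow m w l) x = ip m x (ev (m - l + 1)) - ip m x (ev (m - l))"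
    unfolding ip_def brow_def using True by (simp add: algebra_simps sum_subtractf)
  then show ?thesis using True ip_ev[OF a(1)] ip_ev[OF a(2)] by simp
next
  case False
  have a: "1 \<in> {1..m}" using assms by auto
  have "ip m (brow m w l) x = w * ip m x (ev 1)"
    unfolding ip_def brow_def using False by (simp add: algebra_simps sum_distrib_left)
  then show ?thesis using False ip_ev[OF a] by simp
qed

lemma Lset_iff: "l \<in> Lset m n i \<longleftrightarrow> l \<in> {1..m} \<and> l mod n = (i - 1) mod n"
  unfolding Lset_def by simp

lemma g0_Zs:
  assumes x: "x \<in> Zs m b" and bm: "b < m" and bL: "b \<notin> Lset m n i" and i1: "i = 1 \<longrightarrow> b \<ge> 1"
  shows "g0 l0 l1 l2 m w n i x \<in> Zs m b"
  unfolding Zs_def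
proof (intro CollectI allI impI)
  fix j assume j: "j \<le> m - b \<or> m < j"
  have xj: "x j = 0" using x j unfolding Zs_def by auto
  have evj: "(if i = 1 then l0 * ev m j else 0) = 0"
    using i1 j bm by (auto simp: ev_def)
  have terms: "ip m (brow m w l) x * brow m w l j = 0" if l: "l \<in> Lset m n i" for l
  proof -
    have lm: "l \<in> {1..m}" using l Lset_sub by blast
    have lb: "l \<noteq> b" using l bL by auto
    show ?thesis
    proof (cases "l < m")
      case True
      show ?thesis
      proof (cases "l < b")
        case True
        then have "brow m w l j = 0" using j \<open>l < m\<close> bm lm unfolding brow_def ev_def by auto
        then show ?thesis by simp
      next
        case False
        then have "b < l" using lb by simp
        then have "x (m - l + 1) = 0" "x (m - l) = 0" using x \<open>l < m\<close> unfolding Zs_def by auto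
        then show ?thesis using ip_brow[OF lm] \<open>l < m\<close> by simp
      qed
    next
      case False
      have "x 1 = 0" using x bm unfolding Zs_def by auto
      then show ?thesis using ip_brow[OF lm] False by simp
    qed
  qed
  have "(\<Sum>l\<in>Lset m n i. ip m (brow m w l) x * brow m w l j) = 0"
    using terms by (intro sum.neutral) auto
  then show "g0 l0 l1 l2 m w n i x j = 0" unfolding g0_def using xj evj by simp
qed


definition phi :: "real \<Rightarrow> real \<Rightarrow> real \<Rightarrow> nat \<Rightarrow> real \<Rightarrow> nat \<Rightarrow> nat \<Rightarrow> real \<Rightarrow> (nat \<Rightarrow> real) \<Rightarrow> (nat \<Rightarrow> real) \<Rightarrow> real" where
  "phi l0 l1 l2 m w n i \<gamma> x u = rfun l0 l1 l2 m w n i u + ip m (\<lambda>j. x j - u j) (\<lambda>j. x j - u j) / (2 * \<gamma>)"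

lemma ip_nonneg: "ip m d d \<ge> 0"
  unfolding ip_def by (intro sum_nonneg) auto

lemma ip_pos:
  assumes "d \<in> vecs m" "d \<noteq> (\<lambda>_. 0)"
  shows "ip m d d > 0"
proof -
  obtain j where j: "d j \<noteq> 0" using assms(2) by auto
  then have jm: "j \<in> {1..m}" using assms(1) unfolding vecs_def by auto
  show ?thesis unfolding ip_def
    by (rule sum_pos2[OF _ jm]) (use j in \<open>auto simp: zero_less_mult_iff linorder_neq_iff\<close>)
qed

lemma phi_line:
  "phi l0 l1 l2 m w n i \<gamma> x (\<lambda>j. u j + t * d j) = phi l0 l1 l2 m w n i \<gamma> x u
     + t * (ip m (g0 l0 l1 l2 m w n i u) d - 2 * ip m (\<lambda>j. x j - u j) d / (2 * \<gamma>))
     + t\<^sup>2 * (l1 * (\<Sum>l\<in>Lset m n i. (ip m (brow m w l) d)\<^sup>2) + l2 * ip m d d + ip m d d / (2 * \<gamma>))"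
proof -
  have e: "(\<lambda>j. x j - (u j + t * d j)) = (\<lambda>j. (x j - u j) + t * (- d j))" by (simp add: algebra_simps)
  have n1: "ip m y (\<lambda>j. - d j) = - ip m y d" for y unfolding ip_def by (simp add: sum_negf)
  have n3: "ip m (\<lambda>j. - d j) y = - ip m d y" for y unfolding ip_def by (simp add: sum_negf)
  have n2: "ip m (\<lambda>j. - d j) (\<lambda>j. - d j) = ip m d d" unfolding ip_def by simp
  show ?thesis
    unfolding phi_def rfun_line e ip_line_self n1 n2 n3
    by (simp add: algebra_simps add_divide_distrib diff_divide_distrib)
qed

lemma phi_strict_conv:
  assumes g: "\<gamma> > 0" and l: "l1 \<ge> 0" "l2 \<ge> 0" and uv: "u \<in> vecs m" "v \<in> vecs m" "u \<noteq> v"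
  shows "phi l0 l1 l2 m w n i \<gamma> x (\<lambda>j. (u j + v j) / 2)
     < (phi l0 l1 l2 m w n i \<gamma> x u + phi l0 l1 l2 m w n i \<gamma> x v) / 2"
proof -
  define d where "d j = v j - u j" for j
  define A where "A = ip m (g0 l0 l1 l2 m w n i u) d - 2 * ip m (\<lambda>j. x j - u j) d / (2 * \<gamma>)"
  define B where "B = l1 * (\<Sum>l\<in>Lset m n i. (ip m (brow m w l) d)\<^sup>2) + l2 * ip m d d + ip m d d / (2 * \<gamma>)"
  have dv: "d \<in> vecs m" using uv unfolding vecs_def d_def by auto
  have dn: "d \<noteq> (\<lambda>_. 0)" using uv(3) unfolding d_def by (force simp: fun_eq_iff)
  have Bpos: "B > 0"
  proof -
    have "l1 * (\<Sum>l\<in>Lset m n i. (ip m (brow m w l) d)\<^sup>2) \<ge> 0" using l by (intro mult_nonneg_nonneg sum_nonneg) auto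
    moreover have "l2 * ip m d d \<ge> 0" using l ip_nonneg by simp
    moreover have "ip m d d / (2 * \<gamma>) > 0" using ip_pos[OF dv dn] g by simp
    ultimately show ?thesis unfolding B_def by linarith
  qed
  have m: "(\<lambda>j. (u j + v j) / 2) = (\<lambda>j. u j + (1/2) * d j)" unfolding d_def by (auto simp: field_simps)
  have v: "v = (\<lambda>j. u j + 1 * d j)" unfolding d_def by auto
  have e1: "phi l0 l1 l2 m w n i \<gamma> x (\<lambda>j. (u j + v j) / 2) = phi l0 l1 l2 m w n i \<gamma> x u + (1/2) * A + (1/2)\<^sup>2 * B"
    unfolding m phi_line A_def B_def ..
  have e2: "phi l0 l1 l2 m w n i \<gamma> x v = phi l0 l1 l2 m w n i \<gamma> x u + 1 * A + 1\<^sup>2 * B"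
    by (subst v) (unfold phi_line A_def B_def, rule refl)
  show ?thesis unfolding e1 e2 using Bpos by (simp add: power2_eq_square field_simps)
qed

lemma exists_min:
  fixes \<Phi> :: "(nat \<Rightarrow> real) \<Rightarrow> real"
  assumes cont: "continuous_on UNIV \<Phi>" and x: "x \<in> vecs m" and R: "R \<ge> 0"
    and coer: "\<And>v. v \<in> vecs m \<Longrightarrow> (\<exists>j\<in>{1..m}. \<bar>v j - x j\<bar> > R) \<Longrightarrow> \<Phi> v > \<Phi> x"
  shows "\<exists>u\<in>vecs m. \<forall>v\<in>vecs m. \<Phi> u \<le> \<Phi> v"
proof -
  define S where "S j = (if j \<in> {1..m} then {x j - R..x j + R} else {0})" for j
  have "compactin (product_topology (\<lambda>_. euclidean) UNIV) (PiE UNIV S)"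
    by (subst compactin_PiE) (auto simp: S_def)
  then have K: "compact (PiE UNIV S)" by (simp add: euclidean_product_topology)
  have xK: "x \<in> PiE UNIV S" using x R unfolding S_def vecs_def by auto
  obtain u where u: "u \<in> PiE UNIV S" "\<forall>y\<in>PiE UNIV S. \<Phi> u \<le> \<Phi> y"
    using continuous_attains_inf[OF K _ continuous_on_subset[OF cont]] xK by blast
  have uv: "u \<in> vecs m" using u(1) unfolding S_def vecs_def by (auto split: if_splits)
  have "\<Phi> u \<le> \<Phi> v" if v: "v \<in> vecs m" for v
  proof (cases "v \<in> PiE UNIV S")
    case True
    then show ?thesis using u by blast
  next
    case False
    then obtain j where "v j \<notin> S j" by auto
    then have "j \<in> {1..m}" "\<bar>v j - x j\<bar> > R"
      using v unfolding S_def vecs_def by (auto split: if_splits)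
    then have "\<Phi> v > \<Phi> x" using coer v by blast
    moreover have "\<Phi> u \<le> \<Phi> x" using u xK by blast
    ultimately show ?thesis by simp
  qed
  then show ?thesis using uv by blast
qed

lemma phi_cont: "\<gamma> \<noteq> 0 \<Longrightarrow> continuous_on UNIV (phi l0 l1 l2 m w n i \<gamma> x)"
  unfolding phi_def[abs_def] rfun_def ip_def
  by (cases "i = 1") (simp_all, (intro continuous_intros continuous_on_product_coordinates; simp)+)


lemma amgm_aux:
  fixes a c g :: real
  assumes "g > 0" "a \<ge> 0" "c \<ge> 0"
  shows "a * c \<le> a\<^sup>2 / (4 * g) + g * c\<^sup>2"
proof -
  have "0 \<le> (a - 2 * g * c)\<^sup>2" by simp
  then have "4 * g * (a * c) \<le> a\<^sup>2 + 4 * g * (g * c\<^sup>2)" by (simp add: power2_eq_square algebra_simps)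
  then have "a * c \<le> (a\<^sup>2 + 4 * g * (g * c\<^sup>2)) / (4 * g)" using assms by (simp add: field_simps)
  also have "\<dots> = a\<^sup>2 / (4 * g) + g * c\<^sup>2" using assms by (simp add: field_simps)
  finally show ?thesis .
qed

lemma sq_le_ip: "j \<in> {1..m} \<Longrightarrow> (d j)\<^sup>2 \<le> ip m d d"
  unfolding ip_def power2_eq_square by (rule member_le_sum) auto

lemma phi_lower:
  assumes g: "\<gamma> > 0" and l: "l1 \<ge> 0" "l2 \<ge> 0" and v: "v \<in> vecs m" and m: "m \<ge> 1"
  shows "phi l0 l1 l2 m w n i \<gamma> x v \<ge> ip m (\<lambda>j. x j - v j) (\<lambda>j. x j - v j) / (4 * \<gamma>) - \<bar>l0\<bar> * \<bar>x m\<bar> - \<gamma> * l0\<^sup>2"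
proof -
  define d where "d = (\<lambda>j. x j - v j)"
  have mm: "m \<in> {1..m}" using m by simp
  have evm: "ip m (ev m) v = v m" using ip_ev[OF mm, of v] ip_sym[of m v "ev m"] by simp
  have S: "l1 * (\<Sum>l\<in>Lset m n i. (ip m (brow m w l) v)\<^sup>2) \<ge> 0" using l by (intro mult_nonneg_nonneg sum_nonneg) auto
  have S2: "l2 * ip m v v \<ge> 0" using l ip_nonneg by simp
  have r: "rfun l0 l1 l2 m w n i v \<ge> - \<bar>l0\<bar> * \<bar>v m\<bar>"
  proof -
    have "- (if i = 1 then l0 * ip m (ev m) v else 0) \<ge> - \<bar>l0\<bar> * \<bar>v m\<bar>"
      unfolding evm by (auto simp: abs_mult[symmetric])
    then show ?thesis using S S2 unfolding rfun_def by linarith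
  qed
  have b: "\<bar>v m\<bar> \<le> \<bar>x m\<bar> + \<bar>d m\<bar>" unfolding d_def by linarith
  have c: "\<bar>l0\<bar> * \<bar>d m\<bar> \<le> (d m)\<^sup>2 / (4 * \<gamma>) + \<gamma> * l0\<^sup>2"
    using amgm_aux[OF g abs_ge_zero abs_ge_zero, of "d m" l0] by (simp add: mult.commute)
  have e: "(d m)\<^sup>2 \<le> ip m d d" by (rule sq_le_ip[OF mm])
  have "- \<bar>l0\<bar> * \<bar>v m\<bar> \<ge> - \<bar>l0\<bar> * \<bar>x m\<bar> - \<bar>l0\<bar> * \<bar>d m\<bar>"
    using mult_left_mono[OF b abs_ge_zero[of l0]] by (simp add: algebra_simps)
  moreover have "(d m)\<^sup>2 / (4 * \<gamma>) \<le> ip m d d / (4 * \<gamma>)" using e g by (simp add: divide_right_mono)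
  moreover have "ip m d d / (2 * \<gamma>) = 2 * (ip m d d / (4 * \<gamma>))" by simp
  moreover have "ip m d d / (4 * \<gamma>) \<ge> 0" using ip_nonneg g by simp
  ultimately show ?thesis using r c unfolding phi_def d_def[symmetric] by linarith
qed

lemma phi_coercive:
  assumes g: "\<gamma> > 0" and l: "l1 \<ge> 0" "l2 \<ge> 0" and m: "m \<ge> 1"
  shows "\<exists>R\<ge>0. \<forall>v\<in>vecs m. (\<exists>j\<in>{1..m}. \<bar>v j - x j\<bar> > R) \<longrightarrow> phi l0 l1 l2 m w n i \<gamma> x v > phi l0 l1 l2 m w n i \<gamma> x x"
proof -
  define C where "C = phi l0 l1 l2 m w n i \<gamma> x x + \<bar>l0\<bar> * \<bar>x m\<bar> + \<gamma> * l0\<^sup>2"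
  define R where "R = 1 + 4 * \<gamma> * \<bar>C\<bar>"
  have R0: "R \<ge> 1" unfolding R_def using g by simp
  have "phi l0 l1 l2 m w n i \<gamma> x v > phi l0 l1 l2 m w n i \<gamma> x x"
    if v: "v \<in> vecs m" and j: "j \<in> {1..m}" "\<bar>v j - x j\<bar> > R" for v j
  proof -
    define d where "d = (\<lambda>j. x j - v j)"
    have dj: "\<bar>d j\<bar> > R" using j unfolding d_def by linarith
    have "\<bar>d j\<bar> * 1 \<le> \<bar>d j\<bar> * \<bar>d j\<bar>" using dj R0 by (intro mult_left_mono) auto
    then have "(d j)\<^sup>2 > R" using dj by (simp add: power2_eq_square abs_mult[symmetric])
    then have "ip m d d > R" using sq_le_ip[OF j(1), of d] by linarith
    then have "ip m d d > 4 * \<gamma> * C" unfolding R_def using g abs_ge_self[of C]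
      by (smt (verit) mult_left_mono)
    then have "ip m d d / (4 * \<gamma>) > C" using g by (simp add: field_simps)
    moreover have "phi l0 l1 l2 m w n i \<gamma> x v \<ge> ip m d d / (4 * \<gamma>) - \<bar>l0\<bar> * \<bar>x m\<bar> - \<gamma> * l0\<^sup>2"
      unfolding d_def by (rule phi_lower[OF g l v m])
    ultimately show ?thesis unfolding C_def by linarith
  qed
  then show ?thesis using R0 by (intro exI[of _ R]) auto
qed

lemma prox_char:
  assumes g: "\<gamma> > 0" and l: "l1 \<ge> 0" "l2 \<ge> 0" and x: "x \<in> vecs m" and m: "m \<ge> 1"
  shows "prox m \<gamma> (rfun l0 l1 l2 m w n i) x \<in> vecs m \<and>
    (\<forall>v\<in>vecs m. phi l0 l1 l2 m w n i \<gamma> x (prox m \<gamma> (rfun l0 l1 l2 m w n i) x) < phi l0 l1 l2 m w n i \<gamma> x v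
        \<or> v = prox m \<gamma> (rfun l0 l1 l2 m w n i) x)"
proof -
  let ?\<Phi> = "phi l0 l1 l2 m w n i \<gamma> x"
  obtain R where R: "R \<ge> 0" "\<forall>v\<in>vecs m. (\<exists>j\<in>{1..m}. \<bar>v j - x j\<bar> > R) \<longrightarrow> ?\<Phi> v > ?\<Phi> x"
    using phi_coercive[OF g l m] by blast
  have cont: "continuous_on UNIV ?\<Phi>" by (rule phi_cont) (use g in simp)
  obtain u where u: "u \<in> vecs m" "\<forall>v\<in>vecs m. ?\<Phi> u \<le> ?\<Phi> v"
    using exists_min[OF cont x R(1)] R(2) by blast
  have Pu: "u \<in> vecs m \<and> (\<forall>v\<in>vecs m. ?\<Phi> u < ?\<Phi> v \<or> v = u)"
  proof (intro conjI ballI u(1))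
    fix v assume v: "v \<in> vecs m"
    show "?\<Phi> u < ?\<Phi> v \<or> v = u"
    proof (rule ccontr)
      assume H: "\<not> (?\<Phi> u < ?\<Phi> v \<or> v = u)"
      have mid: "(\<lambda>j. (u j + v j) / 2) \<in> vecs m" using u(1) v unfolding vecs_def by auto
      have "?\<Phi> (\<lambda>j. (u j + v j) / 2) < (?\<Phi> u + ?\<Phi> v) / 2"
        by (rule phi_strict_conv[OF g l u(1) v]) (use H in auto)
      moreover have "?\<Phi> u \<le> ?\<Phi> (\<lambda>j. (u j + v j) / 2)" using u(2) mid by blast
      moreover have "\<not> ?\<Phi> u < ?\<Phi> v" using H by simp
      ultimately show False by argo
    qed
  qed
  have "prox m \<gamma> (rfun l0 l1 l2 m w n i) x = u"
    unfolding prox_def phi_def[symmetric]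
  proof (rule the_equality)
    show "u \<in> vecs m \<and> (\<forall>v\<in>vecs m. ?\<Phi> u < ?\<Phi> v \<or> v = u)" by (rule Pu)
    fix u' assume u': "u' \<in> vecs m \<and> (\<forall>v\<in>vecs m. ?\<Phi> u' < ?\<Phi> v \<or> v = u')"
    show "u' = u"
    proof (rule ccontr)
      assume "u' \<noteq> u"
      then have "?\<Phi> u < ?\<Phi> u'" "?\<Phi> u' < ?\<Phi> u" using Pu u' by auto
      then show False by simp
    qed
  qed
  then show ?thesis using Pu by simp
qed


lemma prox_Zs:
  assumes x: "x \<in> Zs m b" and bm: "b < m" and bL: "b \<notin> Lset m n i" and i1: "i = 1 \<longrightarrow> b \<ge> 1"
    and g: "\<gamma> > 0" and l: "l1 \<ge> 0" "l2 \<ge> 0" and m: "m \<ge> 1"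
  shows "prox m \<gamma> (rfun l0 l1 l2 m w n i) x \<in> Zs m b"
proof -
  let ?\<Phi> = "phi l0 l1 l2 m w n i \<gamma> x"
  define u where "u = prox m \<gamma> (rfun l0 l1 l2 m w n i) x"
  have xv: "x \<in> vecs m" using Zs_vecs[OF x] .
  have P0: "u \<in> vecs m \<and> (\<forall>v\<in>vecs m. ?\<Phi> u < ?\<Phi> v \<or> v = u)"
    unfolding u_def by (rule prox_char[OF g l xv m])
  then have P: "u \<in> vecs m" "\<forall>v\<in>vecs m. ?\<Phi> u < ?\<Phi> v \<or> v = u" by auto
  define tr where "tr = (\<lambda>j. if m - b < j then u j else 0)"
  have trv: "tr \<in> vecs m" using P(1) unfolding tr_def vecs_def by auto
  have t1: "(ip m (brow m w l) tr)\<^sup>2 \<le> (ip m (brow m w l) u)\<^sup>2" if l: "l \<in> Lset m n i" for l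
  proof -
    have lm: "l \<in> {1..m}" using l Lset_sub by blast
    have lb: "l \<noteq> b" using l bL by auto
    show ?thesis
    proof (cases "l < m")
      case True
      show ?thesis
      proof (cases "l < b")
        case True
        then have "tr (m - l + 1) = u (m - l + 1)" "tr (m - l) = u (m - l)" unfolding tr_def using lm \<open>l < m\<close> by auto
        then show ?thesis using ip_brow[OF lm, of w tr] ip_brow[OF lm, of w u] \<open>l < m\<close> by simp
      next
        case False
        then have "tr (m - l + 1) = 0" "tr (m - l) = 0" unfolding tr_def using lb lm \<open>l < m\<close> bm by auto
        then show ?thesis using ip_brow[OF lm, of w tr] \<open>l < m\<close> by simp
      qed
    next
      case False
      have "tr 1 = 0" unfolding tr_def using bm by auto
      then show ?thesis using ip_brow[OF lm, of w tr] False by simp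
    qed
  qed
  have s1: "(\<Sum>l\<in>Lset m n i. (ip m (brow m w l) tr)\<^sup>2) \<le> (\<Sum>l\<in>Lset m n i. (ip m (brow m w l) u)\<^sup>2)"
    using t1 by (rule sum_mono)
  have s2: "ip m tr tr \<le> ip m u u"
    unfolding ip_def tr_def by (rule sum_mono) auto
  have mm: "m \<in> {1..m}" using m by simp
  have s3: "ip m (ev m) tr = ip m (ev m) u" if "i = 1"
  proof -
    have "tr m = u m" unfolding tr_def using i1 that bm by auto
    then show ?thesis using ip_ev[OF mm, of tr] ip_ev[OF mm, of u] ip_sym[of m "ev m"] by metis
  qed
  have s4: "ip m (\<lambda>j. x j - tr j) (\<lambda>j. x j - tr j) \<le> ip m (\<lambda>j. x j - u j) (\<lambda>j. x j - u j)"
    unfolding ip_def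
  proof (rule sum_mono)
    fix j assume j: "j \<in> {1..m}"
    show "(x j - tr j) * (x j - tr j) \<le> (x j - u j) * (x j - u j)"
    proof (cases "m - b < j")
      case True then show ?thesis unfolding tr_def by simp
    next
      case False
      then have "x j = 0" using x unfolding Zs_def by auto
      then show ?thesis using False unfolding tr_def by simp
    qed
  qed
  have le: "?\<Phi> tr \<le> ?\<Phi> u"
  proof -
    have a: "l1 * (\<Sum>l\<in>Lset m n i. (ip m (brow m w l) tr)\<^sup>2) \<le> l1 * (\<Sum>l\<in>Lset m n i. (ip m (brow m w l) u)\<^sup>2)"
      using s1 l(1) by (rule mult_left_mono)
    have b: "l2 * ip m tr tr \<le> l2 * ip m u u" using s2 l(2) by (rule mult_left_mono)
    have c: "(if i = 1 then l0 * ip m (ev m) tr else 0) = (if i = 1 then l0 * ip m (ev m) u else 0)"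
      using s3 by auto
    have d: "ip m (\<lambda>j. x j - tr j) (\<lambda>j. x j - tr j) / (2 * \<gamma>) \<le> ip m (\<lambda>j. x j - u j) (\<lambda>j. x j - u j) / (2 * \<gamma>)"
      using s4 g by (simp add: divide_right_mono)
    show ?thesis unfolding phi_def rfun_def using a b c d by linarith
  qed
  have "tr = u"
  proof (rule ccontr)
    assume "tr \<noteq> u"
    then have "?\<Phi> u < ?\<Phi> tr" using P(2) trv by auto
    then show False using le by simp
  qed
  then have "u \<in> Zs m b" using P(1) unfolding Zs_def vecs_def tr_def by (auto simp: fun_eq_iff) (metis not_less)
  then show ?thesis unfolding u_def .
qed


definition tk :: "nat \<Rightarrow> (nat \<Rightarrow> nat) \<Rightarrow> nat \<Rightarrow> enat" where
  "tk n a k = Tk n (\<lambda>t (_::unit). a t) k ()"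

lemma Tk_tk: "Tk n idx k \<omega> = tk n (\<lambda>t. idx t \<omega>) k"
  unfolding tk_def by (induction k) simp_all

lemma tk_0: "tk n a 0 = 0" unfolding tk_def by simp

lemma tk_Suc:
  "tk n a (Suc k) = enat s \<longleftrightarrow>
     (\<exists>r<s. tk n a k = enat r \<and> (\<forall>j. r < j \<and> j < s \<longrightarrow> a j mod n \<noteq> Suc k mod n) \<and> a s mod n = Suc k mod n)"
proof -
  define T where "T = tk n a k"
  define P where "P t \<longleftrightarrow> enat t > T \<and> a t mod n = Suc k mod n" for t
  have eq: "tk n a (Suc k) = (if \<exists>t. P t then enat (LEAST t. P t) else \<infinity>)"
    unfolding tk_def T_def P_def by simp
  show ?thesis
  proof
    assume H: "tk n a (Suc k) = enat s"
    then have ex: "\<exists>t. P t" using eq by (auto split: if_splits)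
    then have s: "s = (LEAST t. P t)" using H eq by simp
    have Ps: "P s" unfolding s by (rule LeastI_ex[OF ex])
    then obtain r where r: "T = enat r" "r < s" unfolding P_def
      by (cases T) auto
    have "\<forall>j. r < j \<and> j < s \<longrightarrow> a j mod n \<noteq> Suc k mod n"
    proof (intro allI impI)
      fix j assume j: "r < j \<and> j < s"
      have "\<not> P j" using not_less_Least[of j P] j s by simp
      then show "a j mod n \<noteq> Suc k mod n" using j r unfolding P_def by simp
    qed
    then show "\<exists>r<s. tk n a k = enat r \<and> (\<forall>j. r < j \<and> j < s \<longrightarrow> a j mod n \<noteq> Suc k mod n) \<and> a s mod n = Suc k mod n"
      using r Ps unfolding T_def P_def by blast
  next
    assume "\<exists>r<s. tk n a k = enat r \<and> (\<forall>j. r < j \<and> j < s \<longrightarrow> a j mod n \<noteq> Suc k mod n) \<and> a s mod n = Suc k mod n"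
    then obtain r where r: "r < s" "T = enat r" "\<forall>j. r < j \<and> j < s \<longrightarrow> a j mod n \<noteq> Suc k mod n"
      "a s mod n = Suc k mod n" unfolding T_def by blast
    have Ps: "P s" using r unfolding P_def by simp
    have "(LEAST t. P t) = s"
    proof (rule Least_equality[where P=P, OF Ps])
      fix y assume "P y"
      then have "r < y" "a y mod n = Suc k mod n" using r unfolding P_def by auto
      then show "s \<le> y" using r(3) by (meson not_le)
    qed
    then show "tk n a (Suc k) = enat s" using eq Ps by auto
  qed
qed

lemma tk_local:
  assumes "\<forall>j\<in>{1..r}. a j = b j"
  shows "tk n a k = enat r \<longleftrightarrow> tk n b k = enat r"
  using assms
proof (induction k arbitrary: r)
  case 0
  then show ?case by (simp add: tk_0)
next
  case (Suc k)
  have "\<And>r'. r' < r \<Longrightarrow> (tk n a k = enat r' \<longleftrightarrow> tk n b k = enat r')"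
    using Suc by (intro Suc.IH) auto
  moreover have "\<And>r' j. r' < j \<Longrightarrow> j \<le> r \<Longrightarrow> a j = b j" using Suc.prems by auto
  ultimately show ?case unfolding tk_Suc
    by (smt (verit, best) less_imp_le_nat order_refl)
qed


lemma step_Zs:
  assumes x: "x \<in> Zs m b" and bm: "b < m" and i: "i \<in> {1..n}" and n: "n \<ge> 2"
    and ne: "Suc b mod n \<noteq> i mod n" and g: "\<gamma> > 0" and l: "l1 \<ge> 0" "l2 \<ge> 0" and m: "m \<ge> 1"
  shows "grad m (rfun l0 l1 l2 m w n i) x \<in> Zs m b \<and> prox m \<gamma> (rfun l0 l1 l2 m w n i) x \<in> Zs m b"
proof -
  have bL: "b \<notin> Lset m n i"
  proof
    assume "b \<in> Lset m n i"
    then have "b mod n = (i - 1) mod n" unfolding Lset_def by simp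
    then have "Suc b mod n = Suc (i - 1) mod n" by (metis mod_Suc_eq)
    then show False using ne i by simp
  qed
  have i1: "i = 1 \<longrightarrow> b \<ge> 1"
  proof
    assume "i = 1"
    show "b \<ge> 1"
    proof (rule ccontr)
      assume "\<not> b \<ge> 1" then have "b = 0" by simp
      then show False using ne \<open>i = 1\<close> by simp
    qed
  qed
  have "grad m (rfun l0 l1 l2 m w n i) x = g0 l0 l1 l2 m w n i x"
    by (rule grad_eq[OF Zs_vecs[OF x] m])
  then have "grad m (rfun l0 l1 l2 m w n i) x \<in> Zs m b"
    using g0_Zs[OF x bm bL i1] by simp
  moreover have "prox m \<gamma> (rfun l0 l1 l2 m w n i) x \<in> Zs m b"
    by (rule prox_Zs[OF x bm bL i1 g l m])
  ultimately show ?thesis by simp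
qed

lemma tk_le_Suc: "tk n a k \<le> tk n a (Suc k)"
proof (cases "tk n a (Suc k)")
  case (enat s)
  then obtain r where "r < s" "tk n a k = enat r" using tk_Suc[of n a k s] by auto
  then show ?thesis using enat by simp
next
  case infinity
  then show ?thesis by simp
qed

lemma tk_mono: "j \<le> k \<Longrightarrow> tk n a j \<le> tk n a k"
proof (induction k)
  case 0 then show ?case by simp
next
  case (Suc k)
  then show ?case using tk_le_Suc[of n a k] by (metis le_Suc_eq order.trans order_refl)
qed

lemma tk_gap:
  assumes "tk n a k < enat s" "enat s < tk n a (Suc k)"
  shows "a s mod n \<noteq> Suc k mod n"
proof
  assume H: "a s mod n = Suc k mod n"
  define P where "P t \<longleftrightarrow> enat t > tk n a k \<and> a t mod n = Suc k mod n" for t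
  have Ps: "P s" using H assms unfolding P_def by simp
  have eq0: "tk n a (Suc k) = (if \<exists>t. P t then enat (LEAST t. P t) else \<infinity>)"
    unfolding tk_def P_def by simp
  have eq: "tk n a (Suc k) = enat (LEAST t. P t)"
    using Ps eq0 by auto
  have "(LEAST t. P t) \<le> s" by (rule Least_le[where P=P, OF Ps])
  then show False using assms(2) eq by simp
qed

lemma mod_Suc_ne: "n \<ge> 2 \<Longrightarrow> Suc j mod n \<noteq> j mod n"
  by (simp add: mod_Suc)


lemma part1_main:
  fixes X :: "nat \<Rightarrow> (nat \<Rightarrow> real)" and a :: "nat \<Rightarrow> nat"
  assumes n: "n \<ge> 2" and m: "m \<ge> 1" and l1: "l1 > 0" and l2: "l2 \<ge> 0"
    and ar: "\<forall>t\<ge>1. a t \<in> {1..n}"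
    and gamma_pos: "\<forall>t\<ge>1. \<gamma> t > 0"
    and x0: "X 0 = (\<lambda>_. 0)"
    and pifo: "\<forall>t\<ge>1. X t \<in> lin_span
        ({X s | s. s < t}
         \<union> {grad m (rfun l0 l1 l2 m w n (a s)) (X (s - 1)) | s. 1 \<le> s \<and> s \<le> t}
         \<union> {prox m (\<gamma> s) (rfun l0 l1 l2 m w n (a s)) (X (s - 1)) | s. 1 \<le> s \<and> s \<le> t})"
  shows "\<forall>k\<in>{1..m}. enat t < tk n a k \<longrightarrow> X t \<in> Zs m (k - 1)"
proof (induction t rule: less_induct)
  case (less t)
  show ?case
  proof (intro ballI impI)
    fix k assume k: "k \<in> {1..m}" and tk: "enat t < tk n a k"
    show "X t \<in> Zs m (k - 1)"
    proof (cases "t = 0")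
      case True
      then show ?thesis using x0 unfolding Zs_def by simp
    next
      case False
      have key: "grad m (rfun l0 l1 l2 m w n (a s)) (X (s - 1)) \<in> Zs m (k - 1)
               \<and> prox m (\<gamma> s) (rfun l0 l1 l2 m w n (a s)) (X (s - 1)) \<in> Zs m (k - 1)"
        if s: "1 \<le> s" "s \<le> t" for s
      proof -
        have sk: "enat s \<le> tk n a k" using s(2) tk by (meson enat_ord_simps(1) le_less_trans less_imp_le)
        have ex: "\<exists>j. enat s \<le> tk n a j" using sk by blast
        define j where "j = (LEAST j. enat s \<le> tk n a j)"
        have jle: "enat s \<le> tk n a j" unfolding j_def by (rule LeastI_ex[OF ex])
        have jk: "j \<le> k" unfolding j_def using sk by (intro Least_le)
        have j0: "j \<noteq> 0"
        proof
          assume "j = 0"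
          then have "enat s \<le> 0" using jle by (simp add: tk_0)
          then show False using s by (simp add: zero_enat_def)
        qed
        then obtain j' where j': "j = Suc j'" by (cases j) auto
        have "\<not> enat s \<le> tk n a j'"
          using not_less_Least[of j' "\<lambda>j. enat s \<le> tk n a j"] j' unfolding j_def by simp
        then have lt: "tk n a j' < enat s" by simp
        have sm1: "enat (s - 1) < tk n a (Suc j')" using jle j' s
          by (metis Suc_diff_1 Suc_ile_eq le_eq_less_or_eq less_numeral_extra(1) order.strict_trans1 linorder_not_le)
        have "s - 1 < t" using s by simp
        moreover have "Suc j' \<in> {1..m}" using k jk j' by simp
        ultimately have Xs: "X (s - 1) \<in> Zs m j'"
          using less[of "s - 1"] sm1 by fastforce
        have i: "a s \<in> {1..n}" using ar s by auto
        have g: "\<gamma> s > 0" using gamma_pos s by auto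
        have l: "l1 \<ge> 0" "l2 \<ge> 0" using l1 l2 by auto
        show ?thesis
        proof (cases "tk n a (Suc j') = enat s")
          case True
          then have as: "a s mod n = Suc j' mod n" using tk_Suc[of n a j' s] by auto
          have jk2: "j < k"
          proof (rule ccontr)
            assume "\<not> j < k"
            then have "tk n a k \<le> tk n a j" using tk_mono[of k j n a] by simp
            then show False using True j' tk s by (metis enat_ord_simps(1) order.strict_trans1 leD less_eq_enat_def)
          qed
          have "grad m (rfun l0 l1 l2 m w n (a s)) (X (s - 1)) \<in> Zs m j
               \<and> prox m (\<gamma> s) (rfun l0 l1 l2 m w n (a s)) (X (s - 1)) \<in> Zs m j"
          proof (rule step_Zs[OF _ _ i n _ g l m])
            show "X (s - 1) \<in> Zs m j" using Zs_mono[OF _ Xs] j' by simp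
            show "j < m" using jk2 k by simp
            show "Suc j mod n \<noteq> a s mod n" using as j' mod_Suc_ne[OF n, of j] by simp
          qed
          then show ?thesis using Zs_mono[of j "k - 1"] jk2 by auto
        next
          case False
          then have "enat s < tk n a (Suc j')" using jle j' by simp
          then have ne: "a s mod n \<noteq> Suc j' mod n" by (rule tk_gap[OF lt])
          have "grad m (rfun l0 l1 l2 m w n (a s)) (X (s - 1)) \<in> Zs m j'
               \<and> prox m (\<gamma> s) (rfun l0 l1 l2 m w n (a s)) (X (s - 1)) \<in> Zs m j'"
          proof (rule step_Zs[OF Xs _ i n _ g l m])
            show "j' < m" using jk j' k by simp
            show "Suc j' mod n \<noteq> a s mod n" using ne by simp
          qed
          then show ?thesis using Zs_mono[of j' "k - 1"] jk j' by auto
        qed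
      qed
      have S: "{X s | s. s < t}
         \<union> {grad m (rfun l0 l1 l2 m w n (a s)) (X (s - 1)) | s. 1 \<le> s \<and> s \<le> t}
         \<union> {prox m (\<gamma> s) (rfun l0 l1 l2 m w n (a s)) (X (s - 1)) | s. 1 \<le> s \<and> s \<le> t} \<subseteq> Zs m (k - 1)"
      proof -
        have "X s \<in> Zs m (k - 1)" if "s < t" for s
          using less[OF that] k tk that by (meson enat_ord_simps(2) order.strict_trans)
        then show ?thesis using key by blast
      qed
      show ?thesis
        by (rule lin_span_Zs[OF S]) (use pifo False in auto)
    qed
  qed
qed


lemma PiM_count_sets:
  fixes I :: "'i set"
  assumes I: "finite I"
    and A: "A \<subseteq> space (PiM I (\<lambda>_. count_space (UNIV::'b::countable set)))"
  shows "A \<in> sets (PiM I (\<lambda>_. count_space (UNIV::'b set)))"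
proof -
  have sp: "space (PiM I (\<lambda>_. count_space (UNIV::'b set))) = PiE I (\<lambda>_. UNIV)"
    by (simp add: space_PiM)
  have cA: "countable A"
    using A unfolding sp by (rule countable_subset) (intro countable_PiE I, auto)
  have "A = (\<Union>a\<in>A. PiE I (\<lambda>i. {a i}))"
  proof -
    { fix a assume "a \<in> A"
      then have "a \<in> PiE I (\<lambda>_. UNIV)" using A sp by auto
      then have "PiE I (\<lambda>i. {a i}) = {a}"
        by (auto simp: PiE_def extensional_def Pi_def fun_eq_iff) metis }
    then show ?thesis by auto
  qed
  also have "\<dots> \<in> sets (PiM I (\<lambda>_. count_space (UNIV::'b set)))"
    by (rule sets.countable_UN''[OF cA]) (rule sets_PiM_I_finite[OF I], simp)
  finally show ?thesis .
qed

lemma PiM_count_measurable: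
  fixes I :: "'i set"
  assumes I: "finite I"
  shows "(f :: _ \<Rightarrow> 'c) \<in> measurable (PiM I (\<lambda>_. count_space (UNIV::'b::countable set))) (count_space UNIV)"
  unfolding measurable_def
  unfolding measurable_def by (intro CollectI conjI ballI PiM_count_sets[OF I]) (simp_all add: Pi_def)

lemma (in prob_space) indep_restrict_events:
  fixes X :: "'i \<Rightarrow> 'a \<Rightarrow> 'b::countable"
  assumes ind: "indep_vars (\<lambda>_. count_space UNIV) X I"
    and AB: "A \<inter> B = {}" "A \<subseteq> I" "B \<subseteq> I" "finite A" "finite B"
  shows "prob {\<omega>\<in>space M. F (restrict (\<lambda>i. X i \<omega>) A) \<and> G (restrict (\<lambda>i. X i \<omega>) B)}
       = prob {\<omega>\<in>space M. F (restrict (\<lambda>i. X i \<omega>) A)} * prob {\<omega>\<in>space M. G (restrict (\<lambda>i. X i \<omega>) B)}"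
proof -
  let ?F = "F \<circ> (\<lambda>\<omega>. restrict (\<lambda>i. X i \<omega>) A)"
  let ?G = "G \<circ> (\<lambda>\<omega>. restrict (\<lambda>i. X i \<omega>) B)"
  have iv: "indep_var (count_space UNIV) ?F (count_space UNIV) ?G"
    by (rule indep_var_compose[OF indep_var_restrict[OF ind AB(1-3)]]; rule PiM_count_measurable; fact)
  have "prob ((\<lambda>x. (?F x, ?G x)) -` ({True} \<times> {True}) \<inter> space M)
     = prob (?F -` {True} \<inter> space M) * prob (?G -` {True} \<inter> space M)"
    by (rule indep_varD[OF iv]) simp_all
  moreover have "(\<lambda>x. (?F x, ?G x)) -` ({True} \<times> {True}) \<inter> space M
     = {\<omega>\<in>space M. F (restrict (\<lambda>i. X i \<omega>) A) \<and> G (restrict (\<lambda>i. X i \<omega>) B)}" by (rule set_eqI) (simp add: comp_def conj_commute conj_left_commute)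
  moreover have "?F -` {True} \<inter> space M = {\<omega>\<in>space M. F (restrict (\<lambda>i. X i \<omega>) A)}" by (rule set_eqI) (simp add: comp_def conj_commute conj_left_commute)
  moreover have "?G -` {True} \<inter> space M = {\<omega>\<in>space M. G (restrict (\<lambda>i. X i \<omega>) B)}" by (rule set_eqI) (simp add: comp_def conj_commute conj_left_commute)
  ultimately show ?thesis by simp
qed


lemma (in prob_space) restrict_event:
  fixes X :: "'i \<Rightarrow> 'a \<Rightarrow> 'b::countable"
  assumes ind: "indep_vars (\<lambda>_. count_space UNIV) X I" and A: "A \<subseteq> I" "finite A"
  shows "{\<omega>\<in>space M. F (restrict (\<lambda>i. X i \<omega>) A)} \<in> events"
proof -
  have "(\<lambda>\<omega>. restrict (\<lambda>i. X i \<omega>) A) \<in> measurable M (PiM A (\<lambda>_. count_space (UNIV::'b set)))"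
    using ind A by (intro measurable_restrict) (auto simp: indep_vars_def)
  then have "F \<circ> (\<lambda>\<omega>. restrict (\<lambda>i. X i \<omega>) A) \<in> measurable M (count_space UNIV)"
    by (rule measurable_comp) (rule PiM_count_measurable[OF A(2)])
  then have "(F \<circ> (\<lambda>\<omega>. restrict (\<lambda>i. X i \<omega>) A)) -` {True} \<inter> space M \<in> events"
    by (rule measurable_sets) simp
  moreover have "(F \<circ> (\<lambda>\<omega>. restrict (\<lambda>i. X i \<omega>) A)) -` {True} \<inter> space M = {\<omega>\<in>space M. F (restrict (\<lambda>i. X i \<omega>) A)}"
    by (rule set_eqI) (simp add: comp_def conj_commute)
  ultimately show ?thesis by simp
qed

lemma tk_restrict: "tk n (restrict a {1..r}) k = enat r \<longleftrightarrow> tk n a k = enat r"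
  by (rule tk_local) auto

lemma (in prob_space) tk_event:
  assumes ind: "indep_vars (\<lambda>_. count_space UNIV) idx {1..}"
  shows "{\<omega>\<in>space M. tk n (\<lambda>t. idx t \<omega>) k = enat r} \<in> events"
proof -
  have "{\<omega>\<in>space M. tk n (\<lambda>t. idx t \<omega>) k = enat r} = {\<omega>\<in>space M. (\<lambda>f. tk n f k = enat r) (restrict (\<lambda>t. idx t \<omega>) {1..r})}"
    using tk_restrict by simp
  also have "\<dots> \<in> events" by (rule restrict_event[OF ind]) auto
  finally show ?thesis .
qed

lemma (in prob_space) M_step:
  fixes idx :: "nat \<Rightarrow> 'a \<Rightarrow> nat" and n k s :: nat
  assumes ind: "indep_vars (\<lambda>_. count_space UNIV) idx {1..}"
  defines "c \<equiv> Suc k mod n"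
  shows "prob {\<omega>\<in>space M. tk n (\<lambda>t. idx t \<omega>) (Suc k) = enat s}
     = (\<Sum>r<s. prob {\<omega>\<in>space M. tk n (\<lambda>t. idx t \<omega>) k = enat r}
             * prob {\<omega>\<in>space M. (\<forall>j. r < j \<and> j < s \<longrightarrow> idx j \<omega> mod n \<noteq> c) \<and> idx s \<omega> mod n = c})"
proof -
  define Ar where "Ar r = {\<omega>\<in>space M. tk n (\<lambda>t. idx t \<omega>) k = enat r \<and>
       ((\<forall>j. r < j \<and> j < s \<longrightarrow> idx j \<omega> mod n \<noteq> c) \<and> idx s \<omega> mod n = c)}" for r
  have "{\<omega>\<in>space M. tk n (\<lambda>t. idx t \<omega>) (Suc k) = enat s} = (\<Union>r\<in>{..<s}. Ar r)"
    unfolding Ar_def c_def tk_Suc by auto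
  moreover have Ar_ev: "Ar r \<in> events" if "r < s" for r
  proof -
    have "Ar r = {\<omega>\<in>space M. (\<lambda>f. tk n f k = enat r \<and> ((\<forall>j. r < j \<and> j < s \<longrightarrow> f j mod n \<noteq> c) \<and> f s mod n = c))
                  (restrict (\<lambda>t. idx t \<omega>) {1..s})}"
    proof -
      have "tk n (restrict (\<lambda>t. idx t \<omega>) {1..s}) k = enat r \<longleftrightarrow> tk n (\<lambda>t. idx t \<omega>) k = enat r" for \<omega>
        by (rule tk_local) (use that in auto)
      then show ?thesis unfolding Ar_def using that by auto
    qed
    also have "\<dots> \<in> events" by (rule restrict_event[OF ind]) auto
    finally show ?thesis .
  qed
  moreover have "disjoint_family_on Ar {..<s}"
    unfolding disjoint_family_on_def Ar_def by auto
  ultimately have "prob {\<omega>\<in>space M. tk n (\<lambda>t. idx t \<omega>) (Suc k) = enat s} = (\<Sum>r<s. prob (Ar r))"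
    by (simp add: measure_finite_Union image_subset_iff)
  also have "\<dots> = (\<Sum>r<s. prob {\<omega>\<in>space M. tk n (\<lambda>t. idx t \<omega>) k = enat r}
             * prob {\<omega>\<in>space M. (\<forall>j. r < j \<and> j < s \<longrightarrow> idx j \<omega> mod n \<noteq> c) \<and> idx s \<omega> mod n = c})"
  proof (rule sum.cong[OF refl])
    fix r assume r: "r \<in> {..<s}"
    let ?F = "\<lambda>f. tk n f k = enat r"
    let ?G = "\<lambda>f. (\<forall>j. r < j \<and> j < s \<longrightarrow> f j mod n \<noteq> c) \<and> f s mod n = c"
    have "prob {\<omega>\<in>space M. ?F (restrict (\<lambda>t. idx t \<omega>) {1..r}) \<and> ?G (restrict (\<lambda>t. idx t \<omega>) {Suc r..s})}
       = prob {\<omega>\<in>space M. ?F (restrict (\<lambda>t. idx t \<omega>) {1..r})} * prob {\<omega>\<in>space M. ?G (restrict (\<lambda>t. idx t \<omega>) {Suc r..s})}"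
      by (rule indep_restrict_events[OF ind]) auto
    moreover have "{\<omega>\<in>space M. ?F (restrict (\<lambda>t. idx t \<omega>) {1..r}) \<and> ?G (restrict (\<lambda>t. idx t \<omega>) {Suc r..s})} = Ar r"
      unfolding Ar_def tk_restrict using r by auto
    moreover have "{\<omega>\<in>space M. ?F (restrict (\<lambda>t. idx t \<omega>) {1..r})} = {\<omega>\<in>space M. tk n (\<lambda>t. idx t \<omega>) k = enat r}"
      unfolding tk_restrict by simp
    moreover have "{\<omega>\<in>space M. ?G (restrict (\<lambda>t. idx t \<omega>) {Suc r..s})} = {\<omega>\<in>space M. (\<forall>j. r < j \<and> j < s \<longrightarrow> idx j \<omega> mod n \<noteq> c) \<and> idx s \<omega> mod n = c}"
      using r by auto
    ultimately show "prob (Ar r) = prob {\<omega>\<in>space M. tk n (\<lambda>t. idx t \<omega>) k = enat r}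
             * prob {\<omega>\<in>space M. (\<forall>j. r < j \<and> j < s \<longrightarrow> idx j \<omega> mod n \<noteq> c) \<and> idx s \<omega> mod n = c}"
      by simp
  qed
  finally show ?thesis .
qed


lemma (in prob_space) tail_prob:
  fixes idx :: "nat \<Rightarrow> 'a \<Rightarrow> nat"
  assumes ind: "indep_vars (\<lambda>_. count_space UNIV) idx {1..}"
    and qd: "\<forall>t\<ge>1. prob {\<omega>\<in>space M. idx t \<omega> mod n = c} = q"
    and rs: "r < s"
  shows "prob {\<omega>\<in>space M. (\<forall>j. r < j \<and> j < s \<longrightarrow> idx j \<omega> mod n \<noteq> c) \<and> idx s \<omega> mod n = c}
       = (1 - q) ^ (s - Suc r) * q"
proof -
  define S where "S j = (if j = s then {v. v mod n = c} else {v. v mod n \<noteq> c})" for j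
  have rv: "random_variable (count_space UNIV) (idx j)" if "j \<ge> 1" for j
    using ind that by (auto simp: indep_vars_def)
  have ev: "{\<omega>\<in>space M. idx j \<omega> mod n = c} \<in> events" if "j \<ge> 1" for j
  proof -
    have "idx j -` {v. v mod n = c} \<inter> space M \<in> events" by (rule measurable_sets[OF rv[OF that]]) simp
    moreover have "idx j -` {v. v mod n = c} \<inter> space M = {\<omega>\<in>space M. idx j \<omega> mod n = c}" by auto
    ultimately show ?thesis by simp
  qed
  have "{\<omega>\<in>space M. (\<forall>j. r < j \<and> j < s \<longrightarrow> idx j \<omega> mod n \<noteq> c) \<and> idx s \<omega> mod n = c}
      = (\<Inter>j\<in>{Suc r..s}. idx j -` S j \<inter> space M)"
    using rs unfolding S_def by (auto split: if_splits)
  also have "prob \<dots> = (\<Prod>j\<in>{Suc r..s}. prob (idx j -` S j \<inter> space M))"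
    by (rule indep_varsD[OF ind]) (use rs in auto)
  also have "\<dots> = (\<Prod>j\<in>insert s {Suc r..<s}. prob (idx j -` S j \<inter> space M))"
    using rs by (intro prod.cong) auto
  also have "\<dots> = prob (idx s -` S s \<inter> space M) * (\<Prod>j\<in>{Suc r..<s}. prob (idx j -` S j \<inter> space M))"
    by (rule prod.insert) auto
  also have "prob (idx s -` S s \<inter> space M) = q"
  proof -
    have "idx s -` S s \<inter> space M = {\<omega>\<in>space M. idx s \<omega> mod n = c}" unfolding S_def by auto
    then show ?thesis using qd rs by simp
  qed
  also have "(\<Prod>j\<in>{Suc r..<s}. prob (idx j -` S j \<inter> space M)) = (\<Prod>j\<in>{Suc r..<s}. 1 - q)"
  proof (rule prod.cong[OF refl])
    fix j assume j: "j \<in> {Suc r..<s}"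
    have "idx j -` S j \<inter> space M = space M - {\<omega>\<in>space M. idx j \<omega> mod n = c}"
      using j unfolding S_def by auto
    then show "prob (idx j -` S j \<inter> space M) = 1 - q"
      using prob_compl[OF ev, of j] qd j by simp
  qed
  also have "\<dots> = (1 - q) ^ (s - Suc r)" by simp
  finally show ?thesis by (simp add: mult.commute)
qed


definition geo :: "real \<Rightarrow> enat pmf" where
  "geo q = (if 0 < q then map_pmf (\<lambda>k. enat (Suc k)) (geometric_pmf q) else return_pmf \<infinity>)"

lemma pmf_geo:
  assumes "0 \<le> q" "q \<le> 1"
  shows "pmf (geo q) (enat s) = (if 1 \<le> s then (1 - q) ^ (s - 1) * q else 0)"
proof (cases "0 < q")
  case True
  have inj: "inj (\<lambda>k. enat (Suc k))" by (auto intro: injI)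
  show ?thesis
  proof (cases s)
    case 0
    then show ?thesis using True unfolding geo_def by (auto intro!: pmf_map_outside simp: zero_enat_def)
  next
    case (Suc m)
    then show ?thesis using True assms unfolding geo_def by (simp add: pmf_map_inj'[OF inj])
  qed
next
  case False
  then have "q = 0" using assms by simp
  then show ?thesis unfolding geo_def by simp
qed

lemma enat_measure_eqI:
  fixes \<mu> \<nu> :: "enat measure"
  assumes P: "prob_space \<mu>" "prob_space \<nu>" and S: "sets \<mu> = UNIV" "sets \<nu> = UNIV"
    and eq: "\<And>s. emeasure \<mu> {enat s} = emeasure \<nu> {enat s}"
  shows "\<mu> = \<nu>"
proof (rule measure_eqI_countable[where A=UNIV])
  show "sets \<mu> = Pow UNIV" "sets \<nu> = Pow UNIV" using S by auto
  show "countable (UNIV :: enat set)" by simp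
  have sp: "space \<mu> = UNIV" "space \<nu> = UNIV"
    using sets.top[of \<mu>] sets.top[of \<nu>] sets.sets_into_space[of _ \<mu>] sets.sets_into_space[of _ \<nu>] S by auto
  have r: "emeasure \<mu> (range enat) = emeasure \<nu> (range enat)"
  proof -
    have "emeasure \<mu> (range enat) = (\<integral>\<^sup>+x. emeasure \<mu> {x} \<partial>count_space (range enat))"
      by (rule emeasure_countable_singleton) (use S in auto)
    also have "\<dots> = (\<integral>\<^sup>+x. emeasure \<nu> {x} \<partial>count_space (range enat))"
      by (rule nn_integral_cong) (auto simp: eq)
    also have "\<dots> = emeasure \<nu> (range enat)"
      by (rule emeasure_countable_singleton[symmetric]) (use S in auto)
    finally show ?thesis .
  qed
  have c: "UNIV - range enat = {\<infinity>}" by (auto simp: not_infinity_eq) (metis enat.exhaust rangeI)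
  have "measure \<mu> {\<infinity>} = measure \<nu> {\<infinity>}"
  proof -
    have "measure \<mu> {\<infinity>} = 1 - measure \<mu> (range enat)"
      using prob_space.prob_compl[OF P(1), of "range enat"] S sp c by simp
    also have "\<dots> = 1 - measure \<nu> (range enat)" using r by (simp add: measure_def)
    also have "\<dots> = measure \<nu> {\<infinity>}"
      using prob_space.prob_compl[OF P(2), of "range enat"] S sp c by simp
    finally show ?thesis .
  qed
  then have inf: "emeasure \<mu> {\<infinity>} = emeasure \<nu> {\<infinity>}"
  proof -
    interpret P1: prob_space \<mu> by fact
    interpret P2: prob_space \<nu> by fact
    show ?thesis using \<open>measure \<mu> {\<infinity>} = measure \<nu> {\<infinity>}\<close>
      by (simp add: P1.emeasure_eq_measure P2.emeasure_eq_measure)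
  qed
  fix a :: enat
  show "emeasure \<mu> {a} = emeasure \<nu> {a}"
    by (cases a) (simp_all add: eq inf)
qed


lemma enat_add_eq_enat:
  "(a::enat) + b = enat s \<longleftrightarrow> (\<exists>r\<le>s. a = enat r \<and> b = enat (s - r))"
  by (cases a; cases b) auto

lemma Pi_pmf_comp_prob:
  assumes "finite A" "x \<in> A"
  shows "measure (measure_pmf (Pi_pmf A d G)) {\<nu>. \<nu> x = v} = pmf (G x) v"
proof -
  have "measure (measure_pmf (Pi_pmf A d G)) {\<nu>. \<nu> x = v} = measure (measure_pmf (map_pmf (\<lambda>f. f x) (Pi_pmf A d G))) {v}"
    by (simp add: vimage_def)
  also have "\<dots> = pmf (G x) v" using assms by (simp add: Pi_pmf_component measure_pmf_single)
  finally show ?thesis .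
qed

lemma N_step:
  fixes G :: "nat \<Rightarrow> enat pmf" and K j s :: nat
  assumes jK: "Suc j \<le> K"
  shows "measure (measure_pmf (Pi_pmf {1..K} 0 G)) {\<nu>. (\<Sum>l\<in>{1..Suc j}. \<nu> l) = enat s}
   = (\<Sum>r\<le>s. measure (measure_pmf (Pi_pmf {1..K} 0 G)) {\<nu>. (\<Sum>l\<in>{1..j}. \<nu> l) = enat r} * pmf (G (Suc j)) (enat (s - r)))"
proof -
  define N where "N = measure_pmf (Pi_pmf {1..K} 0 G)"
  interpret N: prob_space N unfolding N_def by (rule measure_pmf.prob_space_axioms)
  have ind: "N.indep_vars (\<lambda>_. count_space UNIV) (\<lambda>l \<nu>. \<nu> l) {1..K}"
    unfolding N_def by (rule indep_vars_Pi_pmf) simp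
  define B where "B r = {\<nu>. (\<Sum>l\<in>{1..j}. \<nu> l) = enat r \<and> \<nu> (Suc j) = enat (s - r)}" for r
  have "{\<nu>. (\<Sum>l\<in>{1..Suc j}. \<nu> l) = enat s} = (\<Union>r\<in>{..s}. B r)"
    unfolding B_def by (auto simp: sum.cl_ivl_Suc enat_add_eq_enat)
  moreover have "disjoint_family_on B {..s}"
    unfolding disjoint_family_on_def B_def by auto
  ultimately have "measure N {\<nu>. (\<Sum>l\<in>{1..Suc j}. \<nu> l) = enat s} = (\<Sum>r\<le>s. measure N (B r))"
    by (simp add: measure_finite_Union N_def)
  also have "\<dots> = (\<Sum>r\<le>s. measure N {\<nu>. (\<Sum>l\<in>{1..j}. \<nu> l) = enat r} * pmf (G (Suc j)) (enat (s - r)))"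
  proof (rule sum.cong[OF refl])
    fix r
    let ?F = "\<lambda>f. (\<Sum>l\<in>{1..j}. f l) = enat r"
    let ?G = "\<lambda>f. f (Suc j) = enat (s - r)"
    have "N.prob {\<omega>\<in>space N. ?F (restrict (\<lambda>l. \<omega> l) {1..j}) \<and> ?G (restrict (\<lambda>l. \<omega> l) {Suc j})}
       = N.prob {\<omega>\<in>space N. ?F (restrict (\<lambda>l. \<omega> l) {1..j})} * N.prob {\<omega>\<in>space N. ?G (restrict (\<lambda>l. \<omega> l) {Suc j})}"
      by (rule N.indep_restrict_events[OF ind]) (use jK in auto)
    moreover have "\<And>\<omega>. (\<Sum>l\<in>{1..j}. restrict (\<lambda>l. \<omega> l) {1..j} l) = (\<Sum>l\<in>{1..j}. \<omega> l)"
      by (rule sum.cong) auto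
    ultimately have "measure N (B r) = measure N {\<nu>. (\<Sum>l\<in>{1..j}. \<nu> l) = enat r} * measure N {\<nu>. \<nu> (Suc j) = enat (s - r)}"
      unfolding B_def by (simp add: N_def)
    also have "measure N {\<nu>. \<nu> (Suc j) = enat (s - r)} = pmf (G (Suc j)) (enat (s - r))"
      unfolding N_def by (rule Pi_pmf_comp_prob) (use jK in auto)
    finally show "measure N (B r) = measure N {\<nu>. (\<Sum>l\<in>{1..j}. \<nu> l) = enat r} * pmf (G (Suc j)) (enat (s - r))" .
  qed
  finally show ?thesis unfolding N_def .
qed


lemma mod_range_eq:
  assumes "n \<ge> 1" "v \<in> {1..n}"
  shows "v mod n = Suc j mod n \<longleftrightarrow> v = j mod n + 1"
proof -
  have jm: "j mod n < n" using assms by simp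
  show ?thesis
  proof (cases "v = n")
    case True
    then show ?thesis using jm by (auto simp: mod_Suc)
  next
    case False
    then have "v < n" using assms by auto
    then show ?thesis using jm assms by (auto simp: mod_Suc)
  qed
qed

lemma part2:
  fixes n :: nat and M :: "'a measure" and p :: "nat \<Rightarrow> real" and idx :: "nat \<Rightarrow> 'a \<Rightarrow> nat" and k :: nat
  assumes n: "n \<ge> 2"
    and P: "prob_space M"
    and p_nonneg: "\<forall>j\<in>{1..n}. p j \<ge> 0" and p_sum: "(\<Sum>j=1..n. p j) = 1"
    and idx_range: "\<forall>t\<ge>1. \<forall>\<omega>\<in>space M. idx t \<omega> \<in> {1..n}"
    and idx_indep: "prob_space.indep_vars M (\<lambda>_. count_space UNIV) idx {1..}"
    and idx_distr: "\<forall>t\<ge>1. \<forall>j\<in>{1..n}. measure M {\<omega> \<in> space M. idx t \<omega> = j} = p j"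
  shows "\<exists>(N :: (nat \<Rightarrow> enat) measure) Y.
            prob_space N
            \<and> prob_space.indep_vars N (\<lambda>_. count_space UNIV) Y {1..k}
            \<and> (\<forall>l\<in>{1..k}. geometric_rv N (p ((l - 1) mod n + 1)) (Y l))
            \<and> distr M (count_space UNIV) (Tk n idx k)
                = distr N (count_space UNIV) (\<lambda>\<nu>. \<Sum>l=1..k. Y l \<nu>)"
proof -
  interpret P: prob_space M by fact
  define qq where "qq l = p ((l - 1) mod n + 1)" for l
  have qq_rng: "0 \<le> qq l \<and> qq l \<le> 1" for l
  proof -
    have j: "(l - 1) mod n + 1 \<in> {1..n}" using n by (auto simp: Suc_le_eq)
    have "p ((l - 1) mod n + 1) \<le> (\<Sum>j=1..n. p j)"
      by (rule member_le_sum) (use j p_nonneg in auto)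
    then show ?thesis using j p_nonneg p_sum unfolding qq_def by auto
  qed
  define G where "G l = geo (qq l)" for l
  define N where "N = measure_pmf (Pi_pmf {1..k} 0 G)"
  define Y where "Y = (\<lambda>(l::nat) (\<nu>::nat \<Rightarrow> enat). \<nu> l)"
  interpret N: prob_space N unfolding N_def by (rule measure_pmf.prob_space_axioms)
  have indN: "N.indep_vars (\<lambda>_. count_space UNIV) Y {1..k}"
    unfolding N_def Y_def by (rule indep_vars_Pi_pmf) simp
  have geoN: "geometric_rv N (p ((l - 1) mod n + 1)) (Y l)" if "l \<in> {1..k}" for l
    unfolding geometric_rv_def
  proof (intro conjI allI)
    show "Y l \<in> N \<rightarrow>\<^sub>M count_space UNIV" unfolding N_def by simp
    fix s
    have "measure N {\<omega> \<in> space N. Y l \<omega> = enat s} = pmf (G l) (enat s)"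
      unfolding N_def Y_def using Pi_pmf_comp_prob[of "{1..k}" l 0 G "enat s"] that by simp
    also have "\<dots> = (if 1 \<le> s then (1 - p ((l - 1) mod n + 1)) ^ (s - 1) * p ((l - 1) mod n + 1) else 0)"
      unfolding G_def using qq_rng[of l] by (simp add: pmf_geo qq_def)
    finally show "measure N {\<omega> \<in> space N. Y l \<omega> = enat s} = (if 1 \<le> s then (1 - p ((l - 1) mod n + 1)) ^ (s - 1) * p ((l - 1) mod n + 1) else 0)" .
  qed
  have qev: "P.prob {\<omega>\<in>space M. idx t \<omega> mod n = Suc j mod n} = qq (Suc j)" if "t \<ge> 1" for t j
  proof -
    have "{\<omega>\<in>space M. idx t \<omega> mod n = Suc j mod n} = {\<omega>\<in>space M. idx t \<omega> = j mod n + 1}"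
      using idx_range that mod_range_eq[of n _ j] n by auto
    moreover have "j mod n + 1 \<in> {1..n}" using n by (auto simp: Suc_le_eq)
    ultimately show ?thesis using idx_distr that unfolding qq_def by simp
  qed
  have main: "\<forall>s. P.prob {\<omega>\<in>space M. tk n (\<lambda>t. idx t \<omega>) j = enat s}
                = measure N {\<nu>. (\<Sum>l\<in>{1..j}. \<nu> l) = enat s}" if "j \<le> k" for j
    using that
  proof (induction j)
    case 0
    show ?case using N.prob_space P.prob_space by (simp add: tk_0 zero_enat_def N_def)
  next
    case (Suc j)
    show ?case
    proof
      fix s
      have "P.prob {\<omega>\<in>space M. tk n (\<lambda>t. idx t \<omega>) (Suc j) = enat s}
         = (\<Sum>r<s. P.prob {\<omega>\<in>space M. tk n (\<lambda>t. idx t \<omega>) j = enat r}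
             * P.prob {\<omega>\<in>space M. (\<forall>i. r < i \<and> i < s \<longrightarrow> idx i \<omega> mod n \<noteq> Suc j mod n) \<and> idx s \<omega> mod n = Suc j mod n})"
        by (rule P.M_step[OF idx_indep])
      also have "\<dots> = (\<Sum>r<s. measure N {\<nu>. (\<Sum>l\<in>{1..j}. \<nu> l) = enat r} * ((1 - qq (Suc j)) ^ (s - Suc r) * qq (Suc j)))"
      proof (rule sum.cong[OF refl])
        fix r assume r: "r \<in> {..<s}"
        have "P.prob {\<omega>\<in>space M. (\<forall>i. r < i \<and> i < s \<longrightarrow> idx i \<omega> mod n \<noteq> Suc j mod n) \<and> idx s \<omega> mod n = Suc j mod n}
            = (1 - qq (Suc j)) ^ (s - Suc r) * qq (Suc j)"
          by (rule P.tail_prob[OF idx_indep]) (use qev r in auto)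
        then show "P.prob {\<omega>\<in>space M. tk n (\<lambda>t. idx t \<omega>) j = enat r} *
             P.prob {\<omega>\<in>space M. (\<forall>i. r < i \<and> i < s \<longrightarrow> idx i \<omega> mod n \<noteq> Suc j mod n) \<and> idx s \<omega> mod n = Suc j mod n}
           = measure N {\<nu>. (\<Sum>l\<in>{1..j}. \<nu> l) = enat r} * ((1 - qq (Suc j)) ^ (s - Suc r) * qq (Suc j))"
          using Suc by simp
      qed
      also have "\<dots> = (\<Sum>r\<le>s. measure N {\<nu>. (\<Sum>l\<in>{1..j}. \<nu> l) = enat r} * pmf (G (Suc j)) (enat (s - r)))"
      proof -
        have "(\<Sum>r\<le>s. measure N {\<nu>. (\<Sum>l\<in>{1..j}. \<nu> l) = enat r} * pmf (G (Suc j)) (enat (s - r)))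
            = (\<Sum>r<s. measure N {\<nu>. (\<Sum>l\<in>{1..j}. \<nu> l) = enat r} * pmf (G (Suc j)) (enat (s - r)))"
          using qq_rng[of "Suc j"] by (simp add: lessThan_Suc_atMost[symmetric] G_def pmf_geo)
        also have "\<dots> = (\<Sum>r<s. measure N {\<nu>. (\<Sum>l\<in>{1..j}. \<nu> l) = enat r} * ((1 - qq (Suc j)) ^ (s - Suc r) * qq (Suc j)))"
          using qq_rng[of "Suc j"] by (intro sum.cong refl) (auto simp: G_def pmf_geo)
        finally show ?thesis by simp
      qed
      also have "\<dots> = measure N {\<nu>. (\<Sum>l\<in>{1..Suc j}. \<nu> l) = enat s}"
        unfolding N_def by (rule N_step[symmetric]) (use Suc in simp)
      finally show "P.prob {\<omega>\<in>space M. tk n (\<lambda>t. idx t \<omega>) (Suc j) = enat s} = measure N {\<nu>. (\<Sum>l\<in>{1..Suc j}. \<nu> l) = enat s}" .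
    qed
  qed
  have Tmeas: "Tk n idx k \<in> measurable M (count_space UNIV)"
  proof (subst measurable_count_space_eq2_countable, intro conjI ballI)
    show "Tk n idx k \<in> space M \<rightarrow> UNIV" by simp
    have fin: "Tk n idx k -` {enat r} \<inter> space M \<in> P.events" for r
    proof -
      have "Tk n idx k -` {enat r} \<inter> space M = {\<omega>\<in>space M. tk n (\<lambda>t. idx t \<omega>) k = enat r}"
        by (auto simp: Tk_tk)
      then show ?thesis using P.tk_event[OF idx_indep] by simp
    qed
    fix a :: enat
    show "Tk n idx k -` {a} \<inter> space M \<in> P.events"
    proof (cases a)
      case (enat r)
      then show ?thesis using fin by simp
    next
      case infinity
      have "Tk n idx k -` {a} \<inter> space M = space M - (\<Union>r\<in>UNIV. Tk n idx k -` {enat r} \<inter> space M)"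
        using infinity by (auto simp: not_infinity_eq)
      also have "\<dots> \<in> P.events"
        by (intro sets.Diff sets.top sets.countable_UN'') (use fin in auto)
      finally show ?thesis .
    qed
  qed
  have eqd: "distr M (count_space UNIV) (Tk n idx k) = distr N (count_space UNIV) (\<lambda>\<nu>. \<Sum>l=1..k. Y l \<nu>)"
  proof (rule enat_measure_eqI)
    show "prob_space (distr M (count_space UNIV) (Tk n idx k))"
      by (rule P.prob_space_distr[OF Tmeas])
    show "prob_space (distr N (count_space UNIV) (\<lambda>\<nu>. \<Sum>l=1..k. Y l \<nu>))"
      by (rule N.prob_space_distr) (simp add: N_def)
    show "sets (distr M (count_space UNIV) (Tk n idx k)) = UNIV" by simp
    show "sets (distr N (count_space UNIV) (\<lambda>\<nu>. \<Sum>l=1..k. Y l \<nu>)) = UNIV" by simp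
    fix s
    have "emeasure (distr M (count_space UNIV) (Tk n idx k)) {enat s} = emeasure M (Tk n idx k -` {enat s} \<inter> space M)"
      by (rule emeasure_distr[OF Tmeas]) simp
    also have "\<dots> = ennreal (P.prob {\<omega>\<in>space M. tk n (\<lambda>t. idx t \<omega>) k = enat s})"
      by (simp add: P.emeasure_eq_measure Tk_tk vimage_def Int_def conj_commute)
    also have "\<dots> = ennreal (measure N {\<nu>. (\<Sum>l\<in>{1..k}. \<nu> l) = enat s})"
      using main[of k] by simp
    also have "\<dots> = emeasure N ((\<lambda>\<nu>. \<Sum>l=1..k. Y l \<nu>) -` {enat s} \<inter> space N)"
      by (simp add: measure_pmf.emeasure_eq_measure Y_def N_def vimage_def)
    also have "\<dots> = emeasure (distr N (count_space UNIV) (\<lambda>\<nu>. \<Sum>l=1..k. Y l \<nu>)) {enat s}"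
      by (rule emeasure_distr[symmetric]) (simp_all add: N_def)
    finally show "emeasure (distr M (count_space UNIV) (Tk n idx k)) {enat s} = emeasure (distr N (count_space UNIV) (\<lambda>\<nu>. \<Sum>l=1..k. Y l \<nu>)) {enat s}" .
  qed
  show ?thesis
    by (intro exI[of _ N] exI[of _ Y] conjI N.prob_space_axioms indN ballI geoN eqd)
qed


theorem corollary2p3:
  fixes n m :: nat and l0 l1 l2 w :: real
    and M :: "'a measure" and p :: "nat \<Rightarrow> real" and \<gamma> :: "nat \<Rightarrow> real"
    and idx :: "nat \<Rightarrow> 'a \<Rightarrow> nat"
    and x :: "'a \<Rightarrow> nat \<Rightarrow> (nat \<Rightarrow> real)"
  assumes n: "n \<ge> 2" and m: "m \<ge> 1"
    and l0: "l0 \<noteq> 0" and l1: "l1 > 0" and l2: "l2 \<ge> 0"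
    and P: "prob_space M"
    and p_nonneg: "\<forall>j\<in>{1..n}. p j \<ge> 0" and p_sum: "(\<Sum>j=1..n. p j) = 1"
    and idx_range: "\<forall>t\<ge>1. \<forall>\<omega>\<in>space M. idx t \<omega> \<in> {1..n}"
    and idx_indep: "prob_space.indep_vars M (\<lambda>_. count_space UNIV) idx {1..}"
    and idx_distr: "\<forall>t\<ge>1. \<forall>j\<in>{1..n}. measure M {\<omega> \<in> space M. idx t \<omega> = j} = p j"
    and gamma_pos: "\<forall>t\<ge>1. \<gamma> t > 0"
    and x0: "\<forall>\<omega>\<in>space M. x \<omega> 0 = (\<lambda>_. 0)"
    and pifo: "\<forall>\<omega>\<in>space M. \<forall>t\<ge>1. x \<omega> t \<in> lin_span
        ({x \<omega> s | s. s < t}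
         \<union> {grad m (rfun l0 l1 l2 m w n (idx s \<omega>)) (x \<omega> (s - 1)) | s. 1 \<le> s \<and> s \<le> t}
         \<union> {prox m (\<gamma> s) (rfun l0 l1 l2 m w n (idx s \<omega>)) (x \<omega> (s - 1)) | s. 1 \<le> s \<and> s \<le> t})"
  shows "(\<forall>\<omega>\<in>space M. \<forall>k\<in>{1..m}. \<forall>t. enat t < Tk n idx k \<omega> \<longrightarrow> x \<omega> t \<in> Fsp m (k - 1))
       \<and> (\<forall>k\<ge>1. \<exists>(N :: (nat \<Rightarrow> enat) measure) Y.
            prob_space N
            \<and> prob_space.indep_vars N (\<lambda>_. count_space UNIV) Y {1..k}
            \<and> (\<forall>l\<in>{1..k}. geometric_rv N (p ((l - 1) mod n + 1)) (Y l))
            \<and> distr M (count_space UNIV) (Tk n idx k)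
                = distr N (count_space UNIV) (\<lambda>\<nu>. \<Sum>l=1..k. Y l \<nu>))"
  proof (rule conjI)
  show "\<forall>\<omega>\<in>space M. \<forall>k\<in>{1..m}. \<forall>t. enat t < Tk n idx k \<omega> \<longrightarrow> x \<omega> t \<in> Fsp m (k - 1)"
  proof (intro ballI allI impI)
    fix \<omega> k t assume om: "\<omega> \<in> space M" and k: "k \<in> {1..m}" and t: "enat t < Tk n idx k \<omega>"
    have ar: "\<forall>t\<ge>1. idx t \<omega> \<in> {1..n}" using idx_range om by auto
    have pf: "\<forall>t\<ge>1. x \<omega> t \<in> lin_span
        ({x \<omega> s | s. s < t}
         \<union> {grad m (rfun l0 l1 l2 m w n (idx s \<omega>)) (x \<omega> (s - 1)) | s. 1 \<le> s \<and> s \<le> t}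
         \<union> {prox m (\<gamma> s) (rfun l0 l1 l2 m w n (idx s \<omega>)) (x \<omega> (s - 1)) | s. 1 \<le> s \<and> s \<le> t})"
      using pifo om by blast
    have "\<forall>k\<in>{1..m}. enat t < tk n (\<lambda>t. idx t \<omega>) k \<longrightarrow> x \<omega> t \<in> Zs m (k - 1)"
      by (rule part1_main[OF n m l1 l2 ar gamma_pos _ pf]) (use x0 om in auto)
    then have "x \<omega> t \<in> Zs m (k - 1)" using k t by (simp add: Tk_tk)
    then show "x \<omega> t \<in> Fsp m (k - 1)" by (rule Zs_Fsp)
  qed
next
  show "\<forall>k\<ge>1. \<exists>(N :: (nat \<Rightarrow> enat) measure) Y.
            prob_space N
            \<and> prob_space.indep_vars N (\<lambda>_. count_space UNIV) Y {1..k}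
            \<and> (\<forall>l\<in>{1..k}. geometric_rv N (p ((l - 1) mod n + 1)) (Y l))
            \<and> distr M (count_space UNIV) (Tk n idx k)
                = distr N (count_space UNIV) (\<lambda>\<nu>. \<Sum>l=1..k. Y l \<nu>)"
    using part2[OF n P p_nonneg p_sum idx_range idx_indep idx_distr] by blast
qed

end
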